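(* Let $A$ be a non-empty set and let $f\in H_0[\ell_1(A)]_+$ be maximal. Then there exists $\phi\in\ell_\infty(A)^*$ such that $f=g_\phi$, where $g_\phi(x^* )=|\phi(|x^*|)|$ for $x^*\in\ell_\infty(A)$.
   Context: Identify $\ell_1(A)^*$ with $\ell_\infty(A)$. $H[\ell_1(A)]$ is the vector space of positively homogeneous functions $f:\ell_\infty(A)\to\mathbb R$ ($f(\lambda x^* )=\lambda f(x^* )$ for $\lambda>0$), ordered pointwise. For $f\in H[\ell_1(A)]$, $\|f\|_{FBL[\ell_1(A)]}:=\sup\{\sum_{k=1}^n|f(x_k^* )| : n\in\mathbb N,\ x_1^*,\dots,x_n^*\in\ell_\infty(A),\ \sup_{a\in A}\sum_{k=1}^n|x_k^*(a)|\le1\}$, and $H_0[\ell_1(A)]=\{f:\|f\|_{FBL[\ell_1(A)]}<\infty\}$ with positive cone $H_0[\ell_1(A)]_+$. An element $f\in H_0[\ell_1(A)]_+$ is maximal if the only $g\in H_0[\ell_1(A)]_+$ with $g\ge f$ and $\|g\|_{FBL[\ell_1(A)]}=\|f\|_{FBL[\ell_1(A)]}$ is $g=f$. *)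

theory Defs
  imports "HOL-Analysis.Analysis"
begin

text \<open>ell_infinity(A): bounded real functions on A, represented as functions
  on the ambient type that vanish outside A.\<close>
definition linf :: "'a set \<Rightarrow> ('a \<Rightarrow> real) set" where
  "linf A = {x. (\<forall>a. a \<notin> A \<longrightarrow> x a = 0) \<and> bounded (x ` A)}"

definition supnorm :: "'a set \<Rightarrow> ('a \<Rightarrow> real) \<Rightarrow> real" where
  "supnorm A x = (SUP a\<in>A. \<bar>x a\<bar>)"

definition absf :: "('a \<Rightarrow> real) \<Rightarrow> ('a \<Rightarrow> real)" where
  "absf x = (\<lambda>a. \<bar>x a\<bar>)"

definition linf_dual :: "'a set \<Rightarrow> (('a \<Rightarrow> real) \<Rightarrow> real) set" where
  "linf_dual A = {\<phi>.
     (\<forall>x\<in>linf A. \<forall>y\<in>linf A. \<phi> (\<lambda>a. x a + y a) = \<phi> x + \<phi> y) \<and>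
     (\<forall>x\<in>linf A. \<forall>c. \<phi> (\<lambda>a. c * x a) = c * \<phi> x) \<and>
     (\<exists>C. \<forall>x\<in>linf A. \<bar>\<phi> x\<bar> \<le> C * supnorm A x)}"

definition g_of :: "(('a \<Rightarrow> real) \<Rightarrow> real) \<Rightarrow> ('a \<Rightarrow> real) \<Rightarrow> real" where
  "g_of \<phi> x = \<bar>\<phi> (absf x)\<bar>"

text \<open>H[ell_1(A)]: positively homogeneous functions on ell_infinity(A)
  (only values on ell_infinity(A) are relevant).\<close>
definition pos_hom :: "'a set \<Rightarrow> (('a \<Rightarrow> real) \<Rightarrow> real) \<Rightarrow> bool" where
  "pos_hom A f \<longleftrightarrow> (\<forall>x\<in>linf A. \<forall>t>0. f (\<lambda>a. t * x a) = t * f x)"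

definition fbl_sums :: "'a set \<Rightarrow> (('a \<Rightarrow> real) \<Rightarrow> real) \<Rightarrow> real set" where
  "fbl_sums A f = {(\<Sum>k<n. \<bar>f (xs k)\<bar>) | (n::nat) xs.
      (\<forall>k<n. xs k \<in> linf A) \<and> (\<forall>a\<in>A. (\<Sum>k<n. \<bar>xs k a\<bar>) \<le> 1)}"

definition fbl_norm :: "'a set \<Rightarrow> (('a \<Rightarrow> real) \<Rightarrow> real) \<Rightarrow> real" where
  "fbl_norm A f = Sup (fbl_sums A f)"

definition H0 :: "'a set \<Rightarrow> (('a \<Rightarrow> real) \<Rightarrow> real) set" where
  "H0 A = {f. pos_hom A f \<and> bdd_above (fbl_sums A f)}"

definition H0_pos :: "'a set \<Rightarrow> (('a \<Rightarrow> real) \<Rightarrow> real) set" where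
  "H0_pos A = {f \<in> H0 A. \<forall>x\<in>linf A. 0 \<le> f x}"

definition maximal :: "'a set \<Rightarrow> (('a \<Rightarrow> real) \<Rightarrow> real) \<Rightarrow> bool" where
  "maximal A f \<longleftrightarrow> f \<in> H0_pos A \<and>
     (\<forall>g\<in>H0_pos A. (\<forall>x\<in>linf A. f x \<le> g x) \<and> fbl_norm A g = fbl_norm A f
        \<longrightarrow> (\<forall>x\<in>linf A. g x = f x))"

end

theory Submission imports Defs begin

definition sublin :: "('a\<Rightarrow>real) set \<Rightarrow> (('a\<Rightarrow>real)\<Rightarrow>real) \<Rightarrow> bool" where
 "sublin V p \<longleftrightarrow> (\<forall>x\<in>V. \<forall>y\<in>V. p (\<lambda>a. x a + y a) \<le> p x + p y) \<and>
     (\<forall>x\<in>V. \<forall>c>0. p (\<lambda>a. c * x a) = c * p x)"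

lemma hom_from_le:
  fixes c :: real
  assumes sc: "\<And>x c. x\<in>V \<Longrightarrow> (\<lambda>a. c * x a) \<in> V"
    and le: "\<And>x c. x\<in>V \<Longrightarrow> c > 0 \<Longrightarrow> h (\<lambda>a. c * x a) \<le> c * h x"
    and x: "x \<in> V" and c: "c > 0"
  shows "h (\<lambda>a. c * x a) = c * h x"
proof -
  let ?y = "\<lambda>a. c * x a"
  have "h (\<lambda>a. (1/c) * ?y a) \<le> (1/c) * h ?y" by (rule le) (use sc x c in auto)
  moreover have e: "(\<lambda>a. (1/c) * ?y a) = x" using c by auto
  ultimately have "h x \<le> (1/c) * h ?y" by simp
  hence "c * h x \<le> h ?y" using c by (simp add: field_simps)
  with le[OF x c] show ?thesis by linarith
qed

lemma sublin_zero:
  assumes "sublin V p" "z \<in> V"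
    and sc: "\<And>x c. x\<in>V \<Longrightarrow> (\<lambda>a. c * x a) \<in> V"
  shows "p (\<lambda>a. 0) = 0"
proof -
  have z0: "(\<lambda>a. 0::real) \<in> V" using sc[OF assms(2), of 0] by simp
  have h: "\<forall>x\<in>V. \<forall>c>0. p (\<lambda>a. c * x a) = c * p x" using assms(1) sublin_def by blast
  have "\<forall>c>0. p (\<lambda>a. c * (\<lambda>a. 0::real) a) = c * p (\<lambda>a. 0)" by (rule bspec[OF h z0])
  from spec[OF this, of 2] have "p (\<lambda>a. 0) = 2 * p (\<lambda>a. 0)" by simp
  thus ?thesis by simp
qed

lemma sublin_lower:
  assumes "sublin V p" "x \<in> V"
    and sc: "\<And>x c. x\<in>V \<Longrightarrow> (\<lambda>a. c * x a) \<in> V"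
  shows "- p (\<lambda>a. -1 * x a) \<le> p x"
proof -
  have s: "\<And>x y. x\<in>V \<Longrightarrow> y\<in>V \<Longrightarrow> p (\<lambda>a. x a + y a) \<le> p x + p y"
    using assms(1) unfolding sublin_def by blast
  have "p (\<lambda>a. x a + (\<lambda>a. -1 * x a) a) \<le> p x + p (\<lambda>a. -1 * x a)"
    by (rule s[OF assms(2) sc[OF assms(2)]])
  moreover have "(\<lambda>a. x a + (\<lambda>a. -1 * x a) a) = (\<lambda>a. 0)" by simp
  ultimately show ?thesis using sublin_zero[OF assms(1,2) sc] by simp
qed

lemma sublinD1:
  assumes "sublin V p" "x\<in>V" "y\<in>V" "z = (\<lambda>a. x a + y a)"
  shows "p z \<le> p x + p y"
  using assms unfolding sublin_def by blast

lemma sublinD2: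
  assumes "sublin V p" "x\<in>V" "c > 0" "z = (\<lambda>a. c * x a)"
  shows "p z = c * p x"
  using assms unfolding sublin_def by blast

lemma sublin_linear_below:
  fixes V :: "('a\<Rightarrow>real) set" and q
  assumes add: "\<And>x y. x\<in>V \<Longrightarrow> y\<in>V \<Longrightarrow> (\<lambda>a. x a + y a) \<in> V"
    and sc: "\<And>x c. x\<in>V \<Longrightarrow> (\<lambda>a. c * x a) \<in> V"
    and ne: "z0 \<in> V"
    and qs: "sublin V q"
  shows "\<exists>\<phi>. (\<forall>x\<in>V. \<forall>y\<in>V. \<phi> (\<lambda>a. x a + y a) = \<phi> x + \<phi> y) \<and>
    (\<forall>x\<in>V. \<forall>c. \<phi> (\<lambda>a. c * x a) = c * \<phi> x) \<and> (\<forall>x\<in>V. \<phi> x \<le> q x)"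
proof -
  have zV: "(\<lambda>a. 0) \<in> V" using sc[OF ne, of 0] by simp
  define P where "P = {p. sublin V p \<and> (\<forall>x\<in>V. p x \<le> q x) \<and> (\<forall>x. x \<notin> V \<longrightarrow> p x = 0)}"
  define R where "R = (\<lambda>(p1::('a\<Rightarrow>real)\<Rightarrow>real) p2. \<forall>x\<in>V. p2 x \<le> p1 x)"
  define r where "r = relation_of R P"
  have po0: "partial_order_on P r"
    unfolding r_def
  proof (rule partial_order_on_relation_ofI)
    show "R a a" for a unfolding R_def by simp
    show "R a c" if "R a b" "R b c" for a b c using that unfolding R_def by (meson order_trans)
    show "a = b" if "a \<in> P" "b \<in> P" "R a b" "R b a" for a b
    proof
      fix x show "a x = b x"
      proof (cases "x \<in> V")
        case True then show ?thesis using that unfolding R_def by (meson antisym)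
      next
        case False then show ?thesis using that unfolding P_def by auto
      qed
    qed
  qed
  have po: "Partial_order r" unfolding r_def
    by (rule Partial_order_relation_ofI) (use po0 r_def in simp)
  have FP: "Field r = P" unfolding r_def relation_of_def Field_def R_def by auto
  have lowb: "- q (\<lambda>a. -1 * x a) \<le> p x" if "p \<in> P" "x \<in> V" for p x
  proof -
    have "- p (\<lambda>a. -1 * x a) \<le> p x" using sublin_lower[of V p x] that sc unfolding P_def by blast
    moreover have "p (\<lambda>a. -1 * x a) \<le> q (\<lambda>a. -1 * x a)" using that sc unfolding P_def by blast
    ultimately show ?thesis by linarith
  qed
  have ub: "\<exists>u\<in>Field r. \<forall>a\<in>C. (a,u) \<in> r" if C: "C \<in> Chains r" for C
  proof (cases "C = {}")
    case True
    define q0 where "q0 = (\<lambda>x. if x \<in> V then q x else 0)"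
    have "sublin V q0" unfolding sublin_def q0_def using qs add sc unfolding sublin_def by simp
    hence "q0 \<in> P" unfolding P_def q0_def by simp
    then show ?thesis using True FP by auto
  next
    case False
    have CP: "C \<subseteq> P" using C unfolding Chains_def r_def relation_of_def by blast
    have cmp: "R p1 p2 \<or> R p2 p1" if "p1 \<in> C" "p2 \<in> C" for p1 p2
      using C that unfolding Chains_def r_def relation_of_def by blast
    define u where "u = (\<lambda>x. if x\<in>V then Inf ((\<lambda>p. p x) ` C) else 0)"
    have bdd: "bdd_below ((\<lambda>p. p x) ` C)" if "x \<in> V" for x
      using lowb CP that by (intro bdd_belowI[of _ "- q (\<lambda>a. -1 * x a)"]) auto
    have lower: "u x \<le> p x" if "p \<in> C" "x \<in> V" for p x
      unfolding u_def using that bdd by (simp add: cInf_lower)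
    have greatest: "m \<le> u x" if "x \<in> V" "\<And>p. p \<in> C \<Longrightarrow> m \<le> p x" for x m
      unfolding u_def using that False by (auto intro!: cINF_greatest)
    have psub: "sublin V p" if "p \<in> C" for p using CP that unfolding P_def by blast
    have usub: "sublin V u"
      unfolding sublin_def
    proof (intro conjI ballI allI impI)
      fix x y assume x: "x\<in>V" and y: "y\<in>V"
      have xy: "(\<lambda>a. x a + y a) \<in> V" using add x y .
      have key: "u (\<lambda>a. x a + y a) \<le> p1 x + p2 y" if "p1\<in>C" "p2\<in>C" for p1 p2
      proof (cases "R p1 p2")
        case True
        have "u (\<lambda>a. x a + y a) \<le> p2 (\<lambda>a. x a + y a)" using lower that xy by blast
        also have "\<dots> \<le> p2 x + p2 y" using sublinD1[OF psub[OF that(2)] x y refl] .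
        also have "\<dots> \<le> p1 x + p2 y" using True x unfolding R_def by auto
        finally show ?thesis .
      next
        case False
        hence "R p2 p1" using cmp that by blast
        have "u (\<lambda>a. x a + y a) \<le> p1 (\<lambda>a. x a + y a)" using lower that xy by blast
        also have "\<dots> \<le> p1 x + p1 y" using sublinD1[OF psub[OF that(1)] x y refl] .
        also have "\<dots> \<le> p1 x + p2 y" using \<open>R p2 p1\<close> y unfolding R_def by auto
        finally show ?thesis .
      qed
      have A: "u (\<lambda>a. x a + y a) - p2 y \<le> u x" if "p2 \<in> C" for p2
        by (rule greatest[OF x]) (use key that in force)
      have "u (\<lambda>a. x a + y a) - u x \<le> u y"
        by (rule greatest[OF y]) (use A in force)
      thus "u (\<lambda>a. x a + y a) \<le> u x + u y" by linarith
    next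
      fix x and c :: real assume x: "x\<in>V" and c: "0 < c"
      show "u (\<lambda>a. c * x a) = c * u x"
      proof (rule hom_from_le[where V=V, OF sc _ x c])
        fix x' and c' :: real assume x': "x' \<in> V" and c': "0 < c'"
        have "u (\<lambda>a. c' * x' a) / c' \<le> u x'"
        proof (rule greatest[OF x'])
          fix p assume p: "p\<in>C"
          have "u (\<lambda>a. c' * x' a) \<le> p (\<lambda>a. c' * x' a)" using lower p sc x' by blast
          also have "\<dots> = c' * p x'" using sublinD2[OF psub[OF p] x' c' refl] .
          finally show "u (\<lambda>a. c' * x' a) / c' \<le> p x'" using c' by (simp add: field_simps)
        qed
        thus "u (\<lambda>a. c' * x' a) \<le> c' * u x'" using c' by (simp add: field_simps)
      qed
    qed
    obtain p0 where p0: "p0 \<in> C" using False by blast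
    have "u \<in> P" unfolding P_def
    proof (intro CollectI conjI allI ballI impI)
      show "sublin V u" by (rule usub)
      fix x assume x: "x \<in> V"
      have "u x \<le> p0 x" by (rule lower[OF p0 x])
      also have "\<dots> \<le> q x" using CP p0 x unfolding P_def by blast
      finally show "u x \<le> q x" .
    next
      fix x assume "x \<notin> V" thus "u x = 0" unfolding u_def by simp
    qed
    moreover have "(a,u) \<in> r" if "a \<in> C" for a
      unfolding r_def relation_of_def R_def using that CP \<open>u \<in> P\<close> lower by blast
    ultimately show ?thesis using FP by blast
  qed
  from Zorns_po_lemma[OF po ub] obtain m where
    mF: "m \<in> Field r" and mmax: "\<forall>a\<in>Field r. (m,a) \<in> r \<longrightarrow> a = m" by blast
  have mP: "m \<in> P" using mF FP by simp
  have mmin: "a = m" if "a \<in> P" "R m a" for a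
    using mmax that mP FP unfolding r_def relation_of_def by blast
  have ms: "sublin V m" using mP unfolding P_def by blast
  have m0: "m (\<lambda>a. 0) = 0" by (rule sublin_zero[OF ms ne sc])
  have mnn: "m z = t * m x" if "x\<in>V" "t \<ge> 0" "z = (\<lambda>a. t * x a)" for x t z
  proof (cases "t = 0")
    case True then show ?thesis using that m0 by simp
  next
    case False then show ?thesis using sublinD2[OF ms that(1) _ that(3)] that(2) by simp
  qed
  have odd: "m (\<lambda>a. -1 * y a) = - m y" if y: "y\<in>V" for y
  proof -
    define T where "T = (\<lambda>x. {m (\<lambda>a. x a + t * y a) - t * m y | t. t \<ge> 0})"
    define my where "my = (\<lambda>x. if x \<in> V then Inf (T x) else 0)"
    have Tne: "T x \<noteq> {}" for x unfolding T_def by auto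
    have Tlb: "- m (\<lambda>a. -1 * x a) \<le> m (\<lambda>a. x a + t * y a) - t * m y" if x: "x\<in>V" "t \<ge> 0" for x t
    proof -
      have xt: "(\<lambda>a. x a + t * y a) \<in> V" using add sc x y by blast
      have "m (\<lambda>a. t * y a) \<le> m (\<lambda>a. x a + t * y a) + m (\<lambda>a. -1 * x a)"
        by (rule sublinD1[OF ms xt sc[OF x(1)]]) (rule ext, simp)
      moreover have "m (\<lambda>a. t * y a) = t * m y" by (rule mnn[OF y x(2) refl])
      ultimately show ?thesis by linarith
    qed
    have Tbdd: "bdd_below (T x)" if "x\<in>V" for x
      unfolding T_def using Tlb[OF that] by (intro bdd_belowI[of _ "- m (\<lambda>a. -1 * x a)"]) auto
    have mylow: "my x \<le> m (\<lambda>a. x a + t * y a) - t * m y" if "x\<in>V" "t\<ge>0" for x t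
      unfolding my_def using that Tbdd[OF that(1)] by (auto intro!: cInf_lower simp: T_def)
    have mygr: "c \<le> my x" if "x\<in>V" "\<And>t. t \<ge> 0 \<Longrightarrow> c \<le> m (\<lambda>a. x a + t * y a) - t * m y" for x c
      unfolding my_def using that Tne by (auto intro!: cInf_greatest simp: T_def)
    have mysub: "sublin V my" unfolding sublin_def
    proof (intro conjI ballI allI impI)
      fix x1 x2 assume x1: "x1\<in>V" and x2: "x2\<in>V"
      have x12: "(\<lambda>a. x1 a + x2 a) \<in> V" using add x1 x2 .
      have key: "my (\<lambda>a. x1 a + x2 a) \<le> (m (\<lambda>a. x1 a + t1 * y a) - t1 * m y) + (m (\<lambda>a. x2 a + t2 * y a) - t2 * m y)"
        if t: "t1 \<ge> 0" "t2 \<ge> 0" for t1 t2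
      proof -
        have h1: "my (\<lambda>a. x1 a + x2 a) \<le> m (\<lambda>a. (x1 a + x2 a) + (t1 + t2) * y a) - t1 * m y - t2 * m y"
          using mylow[OF x12, of "t1+t2"] t by (simp add: ring_distribs)
        have h2: "m (\<lambda>a. (x1 a + x2 a) + (t1 + t2) * y a) \<le> m (\<lambda>a. x1 a + t1 * y a) + m (\<lambda>a. x2 a + t2 * y a)"
          by (rule sublinD1[OF ms]) (use add sc x1 x2 y in \<open>auto simp: algebra_simps intro!: ext\<close>)
        from h1 h2 show ?thesis by linarith
      qed
      have A: "my (\<lambda>a. x1 a + x2 a) - (m (\<lambda>a. x2 a + t2 * y a) - t2 * m y) \<le> my x1" if "t2\<ge>0" for t2
        by (rule mygr[OF x1]) (use key that in force)
      have "my (\<lambda>a. x1 a + x2 a) - my x1 \<le> my x2"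
        by (rule mygr[OF x2]) (use A in force)
      thus "my (\<lambda>a. x1 a + x2 a) \<le> my x1 + my x2" by linarith
    next
      fix x and c :: real assume x: "x \<in> V" and c: "0 < c"
      show "my (\<lambda>a. c * x a) = c * my x"
      proof (rule hom_from_le[where V=V, OF sc _ x c])
        fix x' and c' :: real assume x': "x'\<in>V" and c': "0 < c'"
        have "my (\<lambda>a. c' * x' a) / c' \<le> my x'"
        proof (rule mygr[OF x'])
          fix t :: real assume t: "0 \<le> t"
          have h1: "my (\<lambda>a. c' * x' a) \<le> m (\<lambda>a. c' * x' a + (c' * t) * y a) - (c' * t) * m y"
            using mylow[OF sc[OF x'], of "c' * t"] t c' by simp
          have h2: "m (\<lambda>a. c' * x' a + (c' * t) * y a) = c' * m (\<lambda>a. x' a + t * y a)"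
            by (rule sublinD2[OF ms _ c']) (use add sc x' y in \<open>auto simp: algebra_simps intro!: ext\<close>)
          from h1 h2 have "my (\<lambda>a. c' * x' a) \<le> c' * (m (\<lambda>a. x' a + t * y a) - t * m y)"
            by (simp add: algebra_simps)
          thus "my (\<lambda>a. c' * x' a) / c' \<le> m (\<lambda>a. x' a + t * y a) - t * m y" using c' by (simp add: field_simps)
        qed
        thus "my (\<lambda>a. c' * x' a) \<le> c' * my x'" using c' by (simp add: field_simps)
      qed
    qed
    have myle: "my x \<le> m x" if "x\<in>V" for x using mylow[OF that, of 0] by simp
    have "my \<in> P" unfolding P_def
    proof (intro CollectI conjI allI ballI impI)
      show "sublin V my" by (rule mysub)
      fix x assume x: "x \<in> V"
      have "my x \<le> m x" by (rule myle[OF x])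
      also have "\<dots> \<le> q x" using mP x unfolding P_def by blast
      finally show "my x \<le> q x" .
    next
      fix x assume "x \<notin> V" thus "my x = 0" unfolding my_def by simp
    qed
    hence "my = m" using mmin myle unfolding R_def by blast
    moreover have "my (\<lambda>a. -1 * y a) \<le> m (\<lambda>a. (\<lambda>a. -1 * y a) a + 1 * y a) - 1 * m y"
      by (rule mylow[OF sc[OF y]]) simp
    ultimately have "m (\<lambda>a. -1 * y a) \<le> - m y" using m0 by simp
    moreover have "- m (\<lambda>a. -1 * y a) \<le> m y" by (rule sublin_lower[OF ms y sc])
    ultimately show ?thesis by linarith
  qed
  show ?thesis
  proof (intro exI[of _ m] conjI ballI allI)
    fix x y assume x: "x\<in>V" and y: "y\<in>V"
    have "m (\<lambda>a. x a + y a) \<le> m x + m y" by (rule sublinD1[OF ms x y refl])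
    moreover have "m x \<le> m (\<lambda>a. x a + y a) + m (\<lambda>a. -1 * y a)"
      by (rule sublinD1[OF ms add[OF x y] sc[OF y]]) (auto intro!: ext)
    ultimately show "m (\<lambda>a. x a + y a) = m x + m y" using odd[OF y] by linarith
  next
    fix x and c :: real assume x: "x\<in>V"
    show "m (\<lambda>a. c * x a) = c * m x"
    proof (cases "c \<ge> 0")
      case True then show ?thesis using mnn[OF x True refl] by simp
    next
      case False
      have "m (\<lambda>a. c * x a) = (-c) * m (\<lambda>a. -1 * x a)"
        by (rule mnn[OF sc[OF x]]) (use False in \<open>auto intro!: ext\<close>)
      then show ?thesis using odd[OF x] by simp
    qed
  next
    fix x assume "x\<in>V" thus "m x \<le> q x" using mP unfolding P_def by blast
  qed
qed

lemma sum_list_map_nth: "sum_list (map g ys) = (\<Sum>k<length ys. g (ys!k))"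
  by (induction ys) (simp_all add: sum.lessThan_Suc_shift del: sum.lessThan_Suc)

lemma linf_iff: "x \<in> linf A \<longleftrightarrow> (\<forall>a. a \<notin> A \<longrightarrow> x a = 0) \<and> (\<exists>M. \<forall>a\<in>A. \<bar>x a\<bar> \<le> M)"
  unfolding linf_def bounded_iff by auto

lemma linf_add: "x \<in> linf A \<Longrightarrow> y \<in> linf A \<Longrightarrow> (\<lambda>a. x a + y a) \<in> linf A"
proof -
  assume x: "x \<in> linf A" and y: "y \<in> linf A"
  then obtain M1 M2 where "\<forall>a\<in>A. \<bar>x a\<bar> \<le> M1" "\<forall>a\<in>A. \<bar>y a\<bar> \<le> M2" unfolding linf_iff by blast
  hence "\<forall>a\<in>A. \<bar>x a + y a\<bar> \<le> M1 + M2" by (meson abs_triangle_ineq add_mono order_trans)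
  thus ?thesis using x y unfolding linf_iff by auto
qed

lemma linf_scale: "x \<in> linf A \<Longrightarrow> (\<lambda>a. c * x a) \<in> linf A"
proof -
  assume x: "x \<in> linf A"
  then obtain M where M: "\<forall>a\<in>A. \<bar>x a\<bar> \<le> M" unfolding linf_iff by blast
  hence "\<forall>a\<in>A. \<bar>c * x a\<bar> \<le> \<bar>c\<bar> * M" by (simp add: abs_mult mult_left_mono)
  thus ?thesis using x unfolding linf_iff by auto
qed

lemma linf_abs: "x \<in> linf A \<Longrightarrow> absf x \<in> linf A"
  unfolding linf_iff absf_def by auto

lemma linf_sum: "(\<forall>k<(n::nat). z k \<in> linf A) \<Longrightarrow> (\<lambda>a. \<Sum>k<n. z k a) \<in> linf A"
proof (induction n)
  case 0 then show ?case unfolding linf_iff by auto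
next
  case (Suc n)
  have "(\<lambda>a. (\<Sum>k<n. z k a) + z n a) \<in> linf A" using Suc by (intro linf_add) auto
  thus ?case by simp
qed

lemma supnorm_ge: "x \<in> linf A \<Longrightarrow> a \<in> A \<Longrightarrow> \<bar>x a\<bar> \<le> supnorm A x"
  unfolding supnorm_def linf_iff
  by (intro cSUP_upper) (auto intro: bdd_aboveI2)

lemma fsum_bound:
  assumes f: "f \<in> H0 A" and ys: "set ys \<subseteq> linf A" and s: "s > 0"
    and b: "\<forall>a\<in>A. sum_list (map (\<lambda>z. \<bar>z a\<bar>) ys) \<le> s"
  shows "sum_list (map f ys) \<le> fbl_norm A f * s"
proof -
  define n where "n = length ys"
  define xs where "xs = (\<lambda>k. (\<lambda>a. (1/s) * (ys!k) a))"
  have ysk: "ys!k \<in> linf A" if "k < n" for k using ys that n_def by auto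
  have xsV: "\<forall>k<n. xs k \<in> linf A" unfolding xs_def using ysk linf_scale by blast
  have "\<forall>a\<in>A. (\<Sum>k<n. \<bar>xs k a\<bar>) \<le> 1"
  proof
    fix a assume a: "a \<in> A"
    have "(\<Sum>k<n. \<bar>xs k a\<bar>) = (1/s) * sum_list (map (\<lambda>z. \<bar>z a\<bar>) ys)"
      unfolding xs_def n_def sum_list_map_nth using s by (simp add: sum_distrib_left abs_mult)
    also have "\<dots> \<le> 1" using b a s by (simp add: field_simps)
    finally show "(\<Sum>k<n. \<bar>xs k a\<bar>) \<le> 1" .
  qed
  hence mem: "(\<Sum>k<n. \<bar>f (xs k)\<bar>) \<in> fbl_sums A f" unfolding fbl_sums_def using xsV by blast
  have le: "(\<Sum>k<n. \<bar>f (xs k)\<bar>) \<le> fbl_norm A f"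
    unfolding fbl_norm_def using mem f unfolding H0_def by (auto intro: cSup_upper)
  have pos: "\<And>x t. x\<in>linf A \<Longrightarrow> t>0 \<Longrightarrow> f (\<lambda>a. t * x a) = t * f x"
    using f unfolding H0_def pos_hom_def by blast
  have ph: "f (xs k) = (1/s) * f (ys!k)" if "k < n" for k
    unfolding xs_def by (rule pos[OF ysk[OF that]]) (use s in simp)
  have "sum_list (map f ys) = (\<Sum>k<n. f (ys!k))" unfolding n_def by (rule sum_list_map_nth)
  also have "\<dots> = s * (\<Sum>k<n. f (xs k))" using ph s by (simp add: sum_distrib_left)
  also have "\<dots> \<le> s * (\<Sum>k<n. \<bar>f (xs k)\<bar>)" using s by (intro mult_left_mono sum_mono) auto
  also have "\<dots> \<le> s * fbl_norm A f" using s le by simp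
  finally show ?thesis by (simp add: mult.commute)
qed

lemma fbl_sums_0: "0 \<in> fbl_sums A h"
proof -
  show ?thesis unfolding fbl_sums_def
    by (rule CollectI, rule exI[of _ "0::nat"], rule exI[of _ "\<lambda>k a. 0"]) simp
qed

lemma sl_abs_scale: fixes c :: real and ys :: "('a \<Rightarrow> real) list"
  shows "sum_list (map (\<lambda>z. \<bar>z a\<bar>) (map (\<lambda>z. (\<lambda>a. c * z a)) ys)) = \<bar>c\<bar> * sum_list (map (\<lambda>z. \<bar>z a\<bar>) ys)"
  by (induction ys) (auto simp: abs_mult distrib_left)

theorem lemma4p7:
  fixes A :: "'a set" and f :: "('a \<Rightarrow> real) \<Rightarrow> real"
  assumes "A \<noteq> {}"
    and "f \<in> H0_pos A"
    and "maximal A f"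
  shows "\<exists>\<phi>\<in>linf_dual A. \<forall>x\<in>linf A. f x = g_of \<phi> x"
proof -
  define N where "N = fbl_norm A f"
  have fH: "f \<in> H0 A" using assms(2) unfolding H0_pos_def by blast
  have fnn: "\<And>x. x\<in>linf A \<Longrightarrow> 0 \<le> f x" using assms(2) unfolding H0_pos_def by blast
  have pos: "\<And>x t. x\<in>linf A \<Longrightarrow> t>0 \<Longrightarrow> f (\<lambda>a. t * x a) = t * f x"
    using fH unfolding H0_def pos_hom_def by blast
  have fbdd: "bdd_above (fbl_sums A f)" using fH unfolding H0_def by simp
  have N0: "0 \<le> N" unfolding N_def fbl_norm_def using fbl_sums_0 fbdd by (rule cSup_upper)
  obtain a0 where a0: "a0 \<in> A" using assms(1) by blast
  define feas where "feas = (\<lambda>x t ys. set ys \<subseteq> linf A \<and> (\<forall>a\<in>A. x a + sum_list (map (\<lambda>z. \<bar>z a\<bar>) ys) \<le> t))"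
  define Q where "Q = (\<lambda>x. {N * t - sum_list (map f ys) | t ys. feas x t ys})"
  define q where "q = (\<lambda>x. Inf (Q x))"
  have Qlb: "- N * (M+1) \<le> N * t - sum_list (map f ys)" if fe: "feas x t ys" and M: "\<forall>a\<in>A. \<bar>x a\<bar> \<le> M" for x t ys M
  proof -
    have b: "\<forall>a\<in>A. sum_list (map (\<lambda>z. \<bar>z a\<bar>) ys) \<le> t + M + 1"
    proof
      fix a assume a: "a \<in> A"
      have "x a + sum_list (map (\<lambda>z. \<bar>z a\<bar>) ys) \<le> t" using fe a unfolding feas_def by blast
      moreover have "- x a \<le> M" using M a abs_le_D2 by blast
      ultimately show "sum_list (map (\<lambda>z. \<bar>z a\<bar>) ys) \<le> t + M + 1" by linarith
    qed
    have "x a0 + sum_list (map (\<lambda>z. \<bar>z a0\<bar>) ys) \<le> t" using fe a0 unfolding feas_def by blast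
    moreover have "- x a0 \<le> M" using M a0 abs_le_D2 by blast
    moreover have "0 \<le> sum_list (map (\<lambda>z. \<bar>z a0\<bar>) ys)" by (rule sum_list_nonneg) auto
    ultimately have tp: "t + M + 1 > 0" by linarith
    have "sum_list (map f ys) \<le> N * (t + M + 1)"
      unfolding N_def by (rule fsum_bound[OF fH _ tp b]) (use fe feas_def in blast)
    thus ?thesis by (simp add: algebra_simps)
  qed
  have bndx: "\<exists>M. \<forall>a\<in>A. \<bar>x a\<bar> \<le> M" if "x \<in> linf A" for x using that unfolding linf_iff by blast
  have Qne: "Q x \<noteq> {}" if x: "x \<in> linf A" for x
  proof -
    obtain M where M: "\<forall>a\<in>A. \<bar>x a\<bar> \<le> M" using bndx[OF x] by blast
    have "feas x M []" unfolding feas_def using M by (auto dest: abs_le_D1)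
    thus ?thesis unfolding Q_def by blast
  qed
  have Qbdd: "bdd_below (Q x)" if x: "x \<in> linf A" for x
  proof -
    obtain M where M: "\<forall>a\<in>A. \<bar>x a\<bar> \<le> M" using bndx[OF x] by blast
    show ?thesis unfolding Q_def using Qlb M by (intro bdd_belowI[of _ "- N * (M+1)"]) auto
  qed
  have qle: "q x \<le> N * t - sum_list (map f ys)" if "x \<in> linf A" "feas x t ys" for x t ys
    unfolding q_def using Qbdd[OF that(1)] that(2) by (intro cInf_lower) (auto simp: Q_def)
  have qgr: "c \<le> q x" if "x \<in> linf A" "\<And>t ys. feas x t ys \<Longrightarrow> c \<le> N * t - sum_list (map f ys)" for x c
    unfolding q_def using Qne[OF that(1)] that(2) by (intro cInf_greatest) (auto simp: Q_def)
  have qs: "sublin (linf A) q"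
    unfolding sublin_def
  proof (intro conjI ballI allI impI)
    fix x y assume x: "x \<in> linf A" and y: "y \<in> linf A"
    have xy: "(\<lambda>a. x a + y a) \<in> linf A" using linf_add x y .
    have key: "q (\<lambda>a. x a + y a) \<le> (N * t1 - sum_list (map f ys1)) + (N * t2 - sum_list (map f ys2))"
      if f1: "feas x t1 ys1" and f2: "feas y t2 ys2" for t1 t2 ys1 ys2
    proof -
      have "feas (\<lambda>a. x a + y a) (t1+t2) (ys1 @ ys2)" unfolding feas_def
      proof (intro conjI ballI)
        show "set (ys1 @ ys2) \<subseteq> linf A" using f1 f2 unfolding feas_def by auto
        fix a assume a: "a \<in> A"
        have "x a + sum_list (map (\<lambda>z. \<bar>z a\<bar>) ys1) \<le> t1" using f1 a unfolding feas_def by blast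
        moreover have "y a + sum_list (map (\<lambda>z. \<bar>z a\<bar>) ys2) \<le> t2" using f2 a unfolding feas_def by blast
        ultimately show "x a + y a + sum_list (map (\<lambda>z. \<bar>z a\<bar>) (ys1 @ ys2)) \<le> t1 + t2" by simp
      qed
      hence "q (\<lambda>a. x a + y a) \<le> N * (t1+t2) - sum_list (map f (ys1 @ ys2))" by (rule qle[OF xy])
      thus ?thesis by (simp add: algebra_simps)
    qed
    have A1: "q (\<lambda>a. x a + y a) - (N * t2 - sum_list (map f ys2)) \<le> q x" if "feas y t2 ys2" for t2 ys2
      by (rule qgr[OF x]) (use key that in force)
    have "q (\<lambda>a. x a + y a) - q x \<le> q y"
      by (rule qgr[OF y]) (use A1 in force)
    thus "q (\<lambda>a. x a + y a) \<le> q x + q y" by linarith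
  next
    fix x and c :: real assume x: "x \<in> linf A" and c: "0 < c"
    show "q (\<lambda>a. c * x a) = c * q x"
    proof (rule hom_from_le[where V="linf A", OF linf_scale _ x c])
      fix x' and c' :: real assume x': "x' \<in> linf A" and c': "0 < c'"
      have "q (\<lambda>a. c' * x' a) / c' \<le> q x'"
      proof (rule qgr[OF x'])
        fix t ys assume fe: "feas x' t ys"
        define ys' where "ys' = map (\<lambda>z. (\<lambda>a. c' * z a)) ys"
        have ysV: "set ys \<subseteq> linf A" using fe unfolding feas_def by blast
        have fe': "feas (\<lambda>a. c' * x' a) (c' * t) ys'" unfolding feas_def
        proof (intro conjI ballI)
          show "set ys' \<subseteq> linf A" unfolding ys'_def using ysV linf_scale by auto
          fix a assume a: "a \<in> A"
          have "x' a + sum_list (map (\<lambda>z. \<bar>z a\<bar>) ys) \<le> t" using fe a unfolding feas_def by blast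
          hence "c' * (x' a + sum_list (map (\<lambda>z. \<bar>z a\<bar>) ys)) \<le> c' * t" using c' by simp
          thus "c' * x' a + sum_list (map (\<lambda>z. \<bar>z a\<bar>) ys') \<le> c' * t"
            unfolding ys'_def sl_abs_scale using c' by (simp add: algebra_simps)
        qed
        have sf: "set zs \<subseteq> linf A \<Longrightarrow> sum_list (map f (map (\<lambda>z. (\<lambda>a. c' * z a)) zs)) = c' * sum_list (map f zs)" for zs
          by (induction zs) (auto simp: pos[OF _ c'] distrib_left)
        have "q (\<lambda>a. c' * x' a) \<le> N * (c' * t) - sum_list (map f ys')" by (rule qle[OF linf_scale[OF x'] fe'])
        also have "\<dots> = c' * (N * t - sum_list (map f ys))" unfolding ys'_def sf[OF ysV] by (simp add: algebra_simps)
        finally show "q (\<lambda>a. c' * x' a) / c' \<le> N * t - sum_list (map f ys)" using c' by (simp add: field_simps)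
      qed
      thus "q (\<lambda>a. c' * x' a) \<le> c' * q x'" using c' by (simp add: field_simps)
    qed
  qed
  have zV: "(\<lambda>a. 0) \<in> linf A" unfolding linf_iff by auto
  obtain \<phi> where \<phi>add: "\<forall>x\<in>linf A. \<forall>y\<in>linf A. \<phi> (\<lambda>a. x a + y a) = \<phi> x + \<phi> y"
    and \<phi>hom: "\<forall>x\<in>linf A. \<forall>c. \<phi> (\<lambda>a. c * x a) = c * \<phi> x"
    and \<phi>q: "\<forall>x\<in>linf A. \<phi> x \<le> q x"
    using sublin_linear_below[OF linf_add linf_scale zV qs] by blast
  have \<phi>ub: "\<phi> x \<le> N * M" if x: "x \<in> linf A" and M: "\<forall>a\<in>A. x a \<le> M" for x M
  proof -
    have "feas x M []" unfolding feas_def using M by auto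
    hence "q x \<le> N * M - sum_list (map f [])" by (rule qle[OF x])
    moreover have "\<phi> x \<le> q x" using \<phi>q x by blast
    ultimately show ?thesis by simp
  qed
  have \<phi>abs: "\<bar>\<phi> x\<bar> \<le> N * M" if x: "x \<in> linf A" and M: "\<forall>a\<in>A. \<bar>x a\<bar> \<le> M" for x M
  proof -
    have "\<phi> x \<le> N * M" using \<phi>ub[OF x] M by (auto dest: abs_le_D1)
    moreover have "\<forall>a\<in>A. -1 * x a \<le> M" using M by (auto dest: abs_le_D2)
    hence "\<phi> (\<lambda>a. -1 * x a) \<le> N * M" by (rule \<phi>ub[OF linf_scale[OF x]])
    moreover have "\<phi> (\<lambda>a. -1 * x a) = -1 * \<phi> x" using \<phi>hom x by blast
    ultimately show ?thesis by linarith
  qed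
  have \<phi>f: "f y \<le> \<phi> (absf y)" if y: "y \<in> linf A" for y
  proof -
    have ay: "absf y \<in> linf A" using linf_abs[OF y] .
    have "feas (\<lambda>a. -1 * absf y a) 0 [y]" unfolding feas_def absf_def using y by auto
    hence "q (\<lambda>a. -1 * absf y a) \<le> N * 0 - sum_list (map f [y])" by (rule qle[OF linf_scale[OF ay]])
    moreover have "\<phi> (\<lambda>a. -1 * absf y a) \<le> q (\<lambda>a. -1 * absf y a)" using \<phi>q linf_scale[OF ay] by blast
    moreover have "\<phi> (\<lambda>a. -1 * absf y a) = -1 * \<phi> (absf y)" using \<phi>hom ay by blast
    ultimately show ?thesis by simp
  qed
  have "\<phi> (\<lambda>a. 0 * 0) = 0 * \<phi> (\<lambda>a. 0)" using spec[OF bspec[OF \<phi>hom zV], of 0] by simp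
  hence \<phi>0: "\<phi> (\<lambda>a. 0) = 0" by simp
  have \<phi>sum: "(\<forall>k<n. z k \<in> linf A) \<Longrightarrow> \<phi> (\<lambda>a. \<Sum>k<n. z k a) = (\<Sum>k<n. \<phi> (z k))" for z and n :: nat
  proof (induction n)
    case 0 then show ?case using \<phi>0 by simp
  next
    case (Suc n)
    have s: "(\<lambda>a. \<Sum>k<n. z k a) \<in> linf A" using Suc.prems by (intro linf_sum) auto
    have "\<phi> (\<lambda>a. (\<Sum>k<n. z k a) + z n a) = \<phi> (\<lambda>a. \<Sum>k<n. z k a) + \<phi> (z n)"
      using \<phi>add s Suc.prems by auto
    then show ?case using Suc by simp
  qed
  define g where "g = g_of \<phi>"
  have gf: "f x \<le> g x" if "x \<in> linf A" for x using \<phi>f[OF that] unfolding g_def g_of_def by simp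
  have gphi: "g x = \<phi> (absf x)" if "x \<in> linf A" for x
    using \<phi>f[OF that] fnn[OF that] unfolding g_def g_of_def by simp
  have gpos: "pos_hom A g" unfolding pos_hom_def
  proof (intro ballI allI impI)
    fix x and t :: real assume x: "x \<in> linf A" and t: "0 < t"
    have "absf (\<lambda>a. t * x a) = (\<lambda>a. t * absf x a)" unfolding absf_def using t by (auto simp: abs_mult)
    hence "\<phi> (absf (\<lambda>a. t * x a)) = t * \<phi> (absf x)" using \<phi>hom linf_abs[OF x] by simp
    thus "g (\<lambda>a. t * x a) = t * g x" unfolding g_def g_of_def using t by (simp add: abs_mult)
  qed
  have gsum_le: "s \<le> N" if sm: "s \<in> fbl_sums A g" for s
  proof -
    obtain n :: nat and xs where s: "s = (\<Sum>k<n. \<bar>g (xs k)\<bar>)" and xsV: "\<forall>k<n. xs k \<in> linf A"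
      and xs1: "\<forall>a\<in>A. (\<Sum>k<n. \<bar>xs k a\<bar>) \<le> 1"
      using sm unfolding fbl_sums_def by blast
    have ak: "\<bar>g (xs k)\<bar> = \<phi> (absf (xs k))" if "k \<in> {..<n}" for k
    proof -
      have xk: "xs k \<in> linf A" using xsV that by blast
      have "0 \<le> \<phi> (absf (xs k))" using \<phi>f[OF xk] fnn[OF xk] by linarith
      thus ?thesis using gphi[OF xk] by simp
    qed
    have "s = (\<Sum>k<n. \<phi> (absf (xs k)))"
      unfolding s by (rule sum.cong[OF refl ak])
    also have "\<dots> = \<phi> (\<lambda>a. \<Sum>k<n. absf (xs k) a)" by (rule sym, rule \<phi>sum) (simp add: xsV linf_abs)
    also have "\<dots> \<le> N * 1"
    proof -
      have s1: "(\<lambda>a. \<Sum>k<n. absf (xs k) a) \<in> linf A" by (rule linf_sum) (use xsV linf_abs in blast)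
      have s2: "\<forall>a\<in>A. (\<Sum>k<n. absf (xs k) a) \<le> 1" using xs1 unfolding absf_def by simp
      show ?thesis by (rule \<phi>ub[OF s1 s2])
    qed
    finally show ?thesis by simp
  qed
  have gbdd: "bdd_above (fbl_sums A g)" using gsum_le by (intro bdd_aboveI[of _ N]) blast
  have "g \<in> H0 A" unfolding H0_def using gpos gbdd by blast
  hence gH: "g \<in> H0_pos A" unfolding H0_pos_def by (simp add: g_def g_of_def)
  have ng1: "fbl_norm A g \<le> N" unfolding fbl_norm_def
    by (rule cSup_least) (use fbl_sums_0 gsum_le in blast)+
  have ng2: "N \<le> fbl_norm A g" unfolding N_def fbl_norm_def
  proof (rule cSup_least)
    show "fbl_sums A f \<noteq> {}" using fbl_sums_0 by blast
    fix s assume "s \<in> fbl_sums A f"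
    then obtain n :: nat and xs where s: "s = (\<Sum>k<n. \<bar>f (xs k)\<bar>)" and xsV: "\<forall>k<n. xs k \<in> linf A"
      and xs1: "\<forall>a\<in>A. (\<Sum>k<n. \<bar>xs k a\<bar>) \<le> 1"
      unfolding fbl_sums_def by blast
    have mem: "(\<Sum>k<n. \<bar>g (xs k)\<bar>) \<in> fbl_sums A g" unfolding fbl_sums_def
      by (rule CollectI, rule exI[of _ n], rule exI[of _ xs]) (use xsV xs1 in simp)
    have fg: "\<bar>f (xs k)\<bar> \<le> \<bar>g (xs k)\<bar>" if "k \<in> {..<n}" for k
    proof -
      have xk: "xs k \<in> linf A" using xsV that by blast
      show ?thesis using gf[OF xk] fnn[OF xk] by linarith
    qed
    have "s \<le> (\<Sum>k<n. \<bar>g (xs k)\<bar>)" unfolding s by (rule sum_mono[OF fg])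
    also have "\<dots> \<le> Sup (fbl_sums A g)" using mem gbdd by (rule cSup_upper)
    finally show "s \<le> Sup (fbl_sums A g)" .
  qed
  have mx: "\<forall>g'\<in>H0_pos A. (\<forall>x\<in>linf A. f x \<le> g' x) \<and> fbl_norm A g' = fbl_norm A f \<longrightarrow> (\<forall>x\<in>linf A. g' x = f x)"
    using assms(3) unfolding maximal_def by blast
  have "fbl_norm A g = fbl_norm A f" using ng1 ng2 unfolding N_def by linarith
  moreover have "(\<forall>x\<in>linf A. f x \<le> g x) \<and> fbl_norm A g = fbl_norm A f \<longrightarrow> (\<forall>x\<in>linf A. g x = f x)"
    using bspec[OF mx gH] .
  ultimately have geq: "\<forall>x\<in>linf A. g x = f x" using gf by blast
  have "\<phi> \<in> linf_dual A" unfolding linf_dual_def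
  proof (intro CollectI conjI)
    show "\<forall>x\<in>linf A. \<forall>y\<in>linf A. \<phi> (\<lambda>a. x a + y a) = \<phi> x + \<phi> y" by (rule \<phi>add)
    show "\<forall>x\<in>linf A. \<forall>c. \<phi> (\<lambda>a. c * x a) = c * \<phi> x" by (rule \<phi>hom)
    show "\<exists>C. \<forall>x\<in>linf A. \<bar>\<phi> x\<bar> \<le> C * supnorm A x"
    proof (rule exI[of _ N], intro ballI)
      fix x assume x: "x \<in> linf A"
      show "\<bar>\<phi> x\<bar> \<le> N * supnorm A x" by (rule \<phi>abs[OF x]) (use supnorm_ge[OF x] in blast)
    qed
  qed
  show ?thesis
  proof (rule bexI[OF _ \<open>\<phi> \<in> linf_dual A\<close>])
    show "\<forall>x\<in>linf A. f x = g_of \<phi> x" using geq unfolding g_def by simp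
  qed
qed

end
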